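(* There is a constant $c$ such that for every basic Boolean formula $\phi$ whose variables are among $v_1,\dots,v_n$ there exists an instruction sequence $X\in\mathrm{IS}^{na}_{br}$ in which the basic instruction $\mathrm{out}.\mathrm{set}{:}F$ does not occur (in any plain, positive test or negative test instruction) such that $X$ computes the $n$-ary Boolean function induced by $\phi$ and $|X|\le c\cdot(\mathrm{size}(\phi)+1)$.
   Context: $\mathbb B=\{T,F\}$. A basic Boolean formula is a propositional formula built from variables $v_1,v_2,\dots$ using only the connectives $\neg,\vee,\wedge$; its size is the number of occurrences of variables and connectives. The $n$-ary Boolean function induced by $\phi$ (variables among $v_1,\dots,v_n$) maps $(b_1,\dots,b_n)$ to $T$ iff $\phi$ is true under $v_j\mapsto b_j$. A primitive instruction is one of: a plain basic instruction $a$, a positive test instruction $+a$, a negative test instruction $-a$ (for a basic instruction $a$), a forward jump instruction $\#l$ ($l\in\mathbb N$), or the termination instruction $!$. An instruction sequence is a finite nonempty sequence $X=u_1;\dots;u_k$ of primitive instructions; its length is $|X|=k$. Basic instructions have the form $f.m$ where the focus $f$ is one of $\mathrm{in}{:}i$, $\mathrm{aux}{:}i$ ($i\ge 1$) or $\mathrm{out}$, each naming a Boolean register, and the method $m$ is one of $\mathrm{set}{:}T$, $\mathrm{set}{:}F$, $\mathrm{get}$. Executing $f.\mathrm{set}{:}b$ sets register $f$ to $b$ and yields reply $b$; executing $f.\mathrm{get}$ leaves the register unchanged and yields its content as reply. Execution of $X=u_1;\dots;u_k$: a counter starts at $1$. If the counter exceeds $k$, execution deadlocks. At position $i$: if $u_i=!$,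 execution terminates; if $u_i=\#l$, execution deadlocks if $l=0$ and otherwise the counter becomes $i+l$; if $u_i$ is $a$, $+a$ or $-a$, the basic instruction $a$ is executed yielding reply $r$, and the counter becomes $i+1$ for $u_i=a$; for $u_i=+a$ it becomes $i+1$ if $r=T$ and $i+2$ if $r=F$; for $u_i=-a$ it becomes $i+1$ if $r=F$ and $i+2$ if $r=T$. $\mathrm{IS}_{br}$ is the set of instruction sequences in which every basic instruction occurring belongs to $\{f.\mathrm{get}: f=\mathrm{in}{:}i \text{ or } f=\mathrm{aux}{:}i\}\cup\{f.\mathrm{set}{:}b: f=\mathrm{aux}{:}i \text{ or } f=\mathrm{out},\ b\in\mathbb B\}$. $\mathrm{IS}^{na}_{br}\subseteq \mathrm{IS}_{br}$ is the set of those in which every basic instruction belongs to $\{\mathrm{in}{:}i.\mathrm{get}: i\ge1\}\cup\{\mathrm{out}.\mathrm{set}{:}T,\mathrm{out}.\mathrm{set}{:}F\}$. $X\in\mathrm{IS}_{br}$ computes $f:\mathbb B^n\to\mathbb B$ if for every $(b_1,\dots,b_n)\in\mathbb B^n$: when $X$ is executed with register $\mathrm{in}{:}j$ initialised to $b_j$ ($j\le n$) and all registers $\mathrm{aux}{:}i$ and $\mathrm{out}$ initialised to $F$, execution terminates (does not deadlock) without ever executing a basic instruction with focus $\mathrm{in}{:}j$ for $j>n$, and at termination register $\mathrm{out}$ contains $f(b_1,\dots,b_n)$. *)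

theory Defs
  imports Main
begin

text \<open>Variables v_1, v_2, ... are represented by Var 1, Var 2, ...;
 the Boolean values T, F are True, False.\<close>

datatype bform = Var nat | Neg bform | Disj bform bform | Conj bform bform

fun fsize :: "bform \<Rightarrow> nat" where
  "fsize (Var i) = 1"
| "fsize (Neg p) = fsize p + 1"
| "fsize (Disj p q) = fsize p + fsize q + 1"
| "fsize (Conj p q) = fsize p + fsize q + 1"

fun fvars :: "bform \<Rightarrow> nat set" where
  "fvars (Var i) = {i}"
| "fvars (Neg p) = fvars p"
| "fvars (Disj p q) = fvars p \<union> fvars q"
| "fvars (Conj p q) = fvars p \<union> fvars q"

fun feval :: "(nat \<Rightarrow> bool) \<Rightarrow> bform \<Rightarrow> bool" where
  "feval v (Var i) = v i"
| "feval v (Neg p) = (\<not> feval v p)"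
| "feval v (Disj p q) = (feval v p \<or> feval v q)"
| "feval v (Conj p q) = (feval v p \<and> feval v q)"

text \<open>The n-ary Boolean function induced by a formula; an argument tuple
 (b_1,...,b_n) is a list bs of length n, with b_j = bs ! (j - 1).\<close>
definition induced :: "nat \<Rightarrow> bform \<Rightarrow> bool list \<Rightarrow> bool" where
  "induced n p bs = feval (\<lambda>j. bs ! (j - 1)) p"

datatype focus = In nat | Aux nat | Out
datatype meth = SetM bool | Get

type_synonym basic = "focus \<times> meth"

datatype prim = Plain basic | PosT basic | NegT basic | Jump nat | Term

type_synonym iseq = "prim list"

fun basic_of :: "prim \<Rightarrow> basic set" where
  "basic_of (Plain a) = {a}"
| "basic_of (PosT a) = {a}"
| "basic_of (NegT a) = {a}"
| "basic_of (Jump l) = {}"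
| "basic_of Term = {}"

definition basics :: "iseq \<Rightarrow> basic set" where
  "basics X = (\<Union>u\<in>set X. basic_of u)"

fun effect :: "basic \<Rightarrow> (focus \<Rightarrow> bool) \<Rightarrow> bool \<times> (focus \<Rightarrow> bool)" where
  "effect (f, SetM b) s = (b, s(f := b))"
| "effect (f, Get) s = (s f, s)"

text \<open>Execution from position i (1-based). Result None = deadlock;
 Some (s, tr) = termination with final register state s, where tr lists the
 basic instructions executed (in order).\<close>
function exec :: "iseq \<Rightarrow> nat \<Rightarrow> (focus \<Rightarrow> bool) \<Rightarrow> ((focus \<Rightarrow> bool) \<times> basic list) option" where
  "exec X i s =
    (if i = 0 \<or> length X < i then None
     else (case X ! (i - 1) of
        Term \<Rightarrow> Some (s, [])
      | Jump l \<Rightarrow> (if l = 0 then None else exec X (i + l) s)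
      | Plain a \<Rightarrow> (case effect a s of (r, s') \<Rightarrow>
            map_option (\<lambda>(t, tr). (t, a # tr)) (exec X (i + 1) s'))
      | PosT a \<Rightarrow> (case effect a s of (r, s') \<Rightarrow>
            map_option (\<lambda>(t, tr). (t, a # tr)) (exec X (if r then i + 1 else i + 2) s'))
      | NegT a \<Rightarrow> (case effect a s of (r, s') \<Rightarrow>
            map_option (\<lambda>(t, tr). (t, a # tr)) (exec X (if r then i + 2 else i + 1) s'))))"
  by pat_completeness auto
termination
  by (relation "measure (\<lambda>(X, i, s). Suc (length X) - i)") auto

definition IS_br :: "iseq set" where
  "IS_br = {X. X \<noteq> [] \<and> basics X \<subseteq>
     {(f, Get) | f i. i \<ge> 1 \<and> (f = In i \<or> f = Aux i)} \<union>
     {(f, SetM b) | f b. f = Out \<or> (\<exists>i\<ge>1. f = Aux i)}}"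

definition IS_na :: "iseq set" where
  "IS_na = {X. X \<in> IS_br \<and> basics X \<subseteq>
     {(In i, Get) | i. i \<ge> 1} \<union> {(Out, SetM True), (Out, SetM False)}}"

text \<open>Initial register state for inputs bs = (b_1,...,b_n): in:j holds b_j for
 1 <= j <= n; aux:i and out hold F. (Registers in:j with j > n are never
 accessed by a computing sequence; their value is set to F.)\<close>
definition init_state :: "bool list \<Rightarrow> focus \<Rightarrow> bool" where
  "init_state bs f = (case f of In j \<Rightarrow> (1 \<le> j \<and> j \<le> length bs \<and> bs ! (j - 1))
                              | Aux i \<Rightarrow> False | Out \<Rightarrow> False)"

definition computes :: "iseq \<Rightarrow> nat \<Rightarrow> (bool list \<Rightarrow> bool) \<Rightarrow> bool" where
  "computes X n F \<longleftrightarrow> X \<in> IS_br \<and>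
    (\<forall>bs. length bs = n \<longrightarrow>
      (\<exists>s tr. exec X 1 (init_state bs) = Some (s, tr) \<and>
         (\<forall>j m. (In j, m) \<in> set tr \<longrightarrow> j \<le> n) \<and>
         s Out = F bs))"

end

theory Submission
  imports Defs
begin

declare exec.simps[simp del]

fun comp :: "bform \<Rightarrow> iseq" where
  "comp (Var i) = [PosT (In i, Get)]"
| "comp (Neg p) = comp p @ [Jump 3, Jump 1]"
| "comp (Conj p q) = comp p @ [Jump 2, Jump (length (comp q) + 2)] @ comp q"
| "comp (Disj p q) = comp p @ [Jump (length (comp q) + 2), Jump 1] @ comp q"

lemma comp_len: "length (comp p) \<le> 2 * fsize p"
  by (induction p) auto

lemma comp_basics: "basics (comp p) \<subseteq> {(In i, Get) | i. i \<in> fvars p}"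
  by (induction p) (auto simp: basics_def)

definition app :: "basic list \<Rightarrow> ((focus \<Rightarrow> bool) \<times> basic list) option \<Rightarrow> ((focus \<Rightarrow> bool) \<times> basic list) option" where
  "app tr x = map_option (\<lambda>(t, tr'). (t, tr @ tr')) x"

lemma app_app: "app a (app b x) = app (a @ b) x"
  by (cases x) (auto simp: app_def)

lemma app_nil: "app [] x = x"
  by (cases x) (auto simp: app_def)

lemma exec_jump: "0 < i \<Longrightarrow> i \<le> length X \<Longrightarrow> X ! (i - 1) = Jump l \<Longrightarrow> 0 < l \<Longrightarrow>
   exec X i s = exec X (i + l) s"
  by (subst exec.simps) auto

lemma jump_at: "X = pre @ Jump l # post \<Longrightarrow> 0 < l \<Longrightarrow>
   exec X (length pre + 1) s = exec X (length pre + 1 + l) s"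
  by (rule exec_jump) (auto simp: nth_append)

lemma exec_posT: "0 < i \<Longrightarrow> i \<le> length X \<Longrightarrow> X ! (i - 1) = PosT (f, Get) \<Longrightarrow>
   exec X i s = app [(f, Get)] (exec X (if s f then i + 1 else i + 2) s)"
  by (subst exec.simps) (auto simp: app_def)

lemma comp_exec:
  "X = pre @ comp p @ post \<Longrightarrow> \<exists>tr. set tr \<subseteq> {(In i, Get) | i. i \<in> fvars p} \<and>
     exec X (length pre + 1) s =
     app tr (exec X (length pre + length (comp p) + (if feval (\<lambda>j. s (In j)) p then 1 else 2)) s)"
proof (induction p arbitrary: pre post)
  case (Var i)
  show ?case
    by (rule exI[of _ "[(In i, Get)]"]) (subst exec_posT, auto simp: Var nth_append)
next
  case (Neg p)
  from Neg.prems have X: "X = pre @ comp p @ ([Jump 3, Jump 1] @ post)" by simp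
  from Neg.IH[OF X] obtain tr where tr: "set tr \<subseteq> {(In i, Get) | i. i \<in> fvars p}"
    and e: "exec X (length pre + 1) s = app tr (exec X (length pre + length (comp p) + (if feval (\<lambda>j. s (In j)) p then 1 else 2)) s)"
    by blast
  have j1: "exec X (length pre + length (comp p) + 1) s = exec X (length pre + length (comp p) + 4) s"
    proof -
      have "0 < (1::nat)" by simp
      have e: "exec X (length (pre @ comp p) + 1) s = exec X (length (pre @ comp p) + 1 + 3) s"
        by (rule jump_at) (simp_all add: X)
      then show ?thesis by (simp add: algebra_simps eval_nat_numeral)
    qed
  have j2: "exec X (length pre + length (comp p) + 2) s = exec X (length pre + length (comp p) + 3) s"
    proof -
      have "0 < (1::nat)" by simp
      have e: "exec X (length (pre @ comp p @ [Jump 3]) + 1) s = exec X (length (pre @ comp p @ [Jump 3]) + 1 + 1) s"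
        by (rule jump_at) (simp_all add: X)
      then show ?thesis by (simp add: algebra_simps eval_nat_numeral)
    qed
  show ?case using tr e j1 j2 by (intro exI[of _ tr]) (auto simp: eval_nat_numeral)
next
  case (Conj p q)
  from Conj.prems have X: "X = pre @ comp p @ ([Jump 2, Jump (length (comp q) + 2)] @ comp q @ post)" by simp
  from Conj.prems have X2: "X = (pre @ comp p @ [Jump 2, Jump (length (comp q) + 2)]) @ comp q @ post" by simp
  from Conj.IH(1)[OF X] obtain tr where tr: "set tr \<subseteq> {(In i, Get) | i. i \<in> fvars p}"
    and e: "exec X (length pre + 1) s = app tr (exec X (length pre + length (comp p) + (if feval (\<lambda>j. s (In j)) p then 1 else 2)) s)"
    by blast
  from Conj.IH(2)[OF X2] obtain tr2 where tr2: "set tr2 \<subseteq> {(In i, Get) | i. i \<in> fvars q}"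
    and e2: "exec X (length pre + length (comp p) + 2 + 1) s = app tr2 (exec X (length pre + length (comp p) + 2 + length (comp q) + (if feval (\<lambda>j. s (In j)) q then 1 else 2)) s)"
    by auto
  have j1: "exec X (length pre + length (comp p) + 1) s = exec X (length pre + length (comp p) + 2 + 1) s"
    proof -
      have "0 < (1::nat)" by simp
      have e: "exec X (length (pre @ comp p) + 1) s = exec X (length (pre @ comp p) + 1 + 2) s"
        by (rule jump_at) (simp_all add: X)
      then show ?thesis by (simp add: algebra_simps eval_nat_numeral)
    qed
  have j2: "exec X (length pre + length (comp p) + 2) s = exec X (length pre + length (comp p) + 2 + length (comp q) + 2) s"
    proof -
      have "0 < (1::nat)" by simp
      have e: "exec X (length (pre @ comp p @ [Jump 2]) + 1) s = exec X (length (pre @ comp p @ [Jump 2]) + 1 + (length (comp q) + 2)) s"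
        by (rule jump_at) (simp_all add: X)
      then show ?thesis by (simp add: algebra_simps eval_nat_numeral)
    qed
  show ?case
  proof (cases "feval (\<lambda>j. s (In j)) p")
    case True
    then show ?thesis using tr tr2 e e2 j1
      by (intro exI[of _ "tr @ tr2"]) (auto simp: app_app add.assoc eval_nat_numeral)
  next
    case False
    then show ?thesis using tr e j2
      by (intro exI[of _ "tr"]) (auto simp: add.assoc eval_nat_numeral)
  qed
next
  case (Disj p q)
  from Disj.prems have X: "X = pre @ comp p @ ([Jump (length (comp q) + 2), Jump 1] @ comp q @ post)" by simp
  from Disj.prems have X2: "X = (pre @ comp p @ [Jump (length (comp q) + 2), Jump 1]) @ comp q @ post" by simp
  from Disj.IH(1)[OF X] obtain tr where tr: "set tr \<subseteq> {(In i, Get) | i. i \<in> fvars p}"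
    and e: "exec X (length pre + 1) s = app tr (exec X (length pre + length (comp p) + (if feval (\<lambda>j. s (In j)) p then 1 else 2)) s)"
    by blast
  from Disj.IH(2)[OF X2] obtain tr2 where tr2: "set tr2 \<subseteq> {(In i, Get) | i. i \<in> fvars q}"
    and e2: "exec X (length pre + length (comp p) + 2 + 1) s = app tr2 (exec X (length pre + length (comp p) + 2 + length (comp q) + (if feval (\<lambda>j. s (In j)) q then 1 else 2)) s)"
    by auto
  have j1: "exec X (length pre + length (comp p) + 1) s = exec X (length pre + length (comp p) + 2 + length (comp q) + 1) s"
    proof -
      have "0 < (1::nat)" by simp
      have e: "exec X (length (pre @ comp p) + 1) s = exec X (length (pre @ comp p) + 1 + (length (comp q) + 2)) s"
        by (rule jump_at) (simp_all add: X)
      then show ?thesis by (simp add: algebra_simps eval_nat_numeral)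
    qed
  have j2: "exec X (length pre + length (comp p) + 2) s = exec X (length pre + length (comp p) + 2 + 1) s"
    proof -
      have "0 < (1::nat)" by simp
      have e: "exec X (length (pre @ comp p @ [Jump (length (comp q) + 2)]) + 1) s = exec X (length (pre @ comp p @ [Jump (length (comp q) + 2)]) + 1 + 1) s"
        by (rule jump_at) (simp_all add: X)
      then show ?thesis by (simp add: algebra_simps eval_nat_numeral)
    qed
  show ?case
  proof (cases "feval (\<lambda>j. s (In j)) p")
    case False
    then show ?thesis using tr tr2 e e2 j2
      by (intro exI[of _ "tr @ tr2"]) (auto simp: app_app add.assoc eval_nat_numeral)
  next
    case True
    then show ?thesis using tr e j1
      by (intro exI[of _ "tr"]) (auto simp: add.assoc eval_nat_numeral)
  qed
qed

lemma feval_cong: "(\<And>j. j \<in> fvars p \<Longrightarrow> v j = w j) \<Longrightarrow> feval v p = feval w p"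
  by (induction p) auto

theorem theorem2:
  shows "\<exists>c::nat. \<forall>(p::bform) (n::nat). fvars p \<subseteq> {1..n} \<longrightarrow>
     (\<exists>X. X \<in> IS_na \<and> (Out, SetM False) \<notin> basics X \<and>
          computes X n (induced n p) \<and> length X \<le> c * (fsize p + 1))"
proof (intro exI[of _ 2] allI impI)
  fix p n assume fv: "fvars p \<subseteq> {1..n}"
  define X where "X = comp p @ [Plain (Out, SetM True), Term]"
  have bX: "basics X \<subseteq> {(In i, Get) | i. i \<in> fvars p} \<union> {(Out, SetM True)}"
    using comp_basics[of p] by (auto simp: X_def basics_def)
  have sub: "basics X \<subseteq> {(In i, Get) | i. i \<ge> 1} \<union> {(Out, SetM True)}"
    using bX fv by fastforce
  have ne: "X \<noteq> []" by (simp add: X_def)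
  have s1: "{(In i, Get) | i. i \<ge> 1} \<union> {(Out, SetM True)} \<subseteq>
     {(f, Get) | f i. i \<ge> 1 \<and> (f = In i \<or> f = Aux i)} \<union>
     {(f, SetM b) | f b. f = Out \<or> (\<exists>i\<ge>1. f = Aux i)}" by blast
  have s2: "{(In i, Get) | i. i \<ge> 1} \<union> {(Out, SetM True)} \<subseteq>
     {(In i, Get) | i. i \<ge> 1} \<union> {(Out, SetM True), (Out, SetM False)}" by blast
  have br: "X \<in> IS_br" unfolding IS_br_def using ne sub s1 by blast
  have na: "X \<in> IS_na" unfolding IS_na_def using br sub s2 by blast
  have nf: "(Out, SetM False) \<notin> basics X" using bX by auto
  have len: "length X \<le> 2 * (fsize p + 1)" using comp_len[of p] by (simp add: X_def)
  have comp: "computes X n (induced n p)"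
    unfolding computes_def
  proof (intro conjI allI impI)
    show "X \<in> IS_br" using na by (simp add: IS_na_def)
  next
    fix bs :: "bool list" assume lb: "length bs = n"
    let ?s = "init_state bs"
    have X0: "X = [] @ comp p @ [Plain (Out, SetM True), Term]" by (simp add: X_def)
    from comp_exec[OF X0, of ?s] obtain tr where tr: "set tr \<subseteq> {(In i, Get) | i. i \<in> fvars p}"
      and e: "exec X 1 ?s = app tr (exec X (length (comp p) + (if feval (\<lambda>j. ?s (In j)) p then 1 else 2)) ?s)"
      by auto
    have fe: "feval (\<lambda>j. ?s (In j)) p = induced n p bs"
      unfolding induced_def
      by (rule feval_cong) (use fv lb in \<open>auto simp: init_state_def\<close>)
    have t2: "exec X (length (comp p) + 2) s = Some (s, [])" for s
      by (subst exec.simps) (auto simp: X_def nth_append)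
    have t1: "exec X (length (comp p) + 1) ?s = Some (?s(Out := True), [(Out, SetM True)])"
      apply (subst exec.simps)
      using t2[of "?s(Out := True)"] by (auto simp: X_def nth_append)
    show "\<exists>s tr. exec X 1 ?s = Some (s, tr) \<and> (\<forall>j m. (In j, m) \<in> set tr \<longrightarrow> j \<le> n) \<and> s Out = induced n p bs"
    proof (cases "induced n p bs")
      case True
      then show ?thesis using e fe t1 tr fv
        by (intro exI[of _ "?s(Out := True)"] exI[of _ "tr @ [(Out, SetM True)]"]) (auto simp: app_def)
    next
      case False
      then show ?thesis using e fe t2[of ?s] tr fv
        by (intro exI[of _ "?s"] exI[of _ "tr"]) (auto simp: app_def init_state_def)
    qed
  qed
  show "\<exists>X. X \<in> IS_na \<and> (Out, SetM False) \<notin> basics X \<and>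
          computes X n (induced n p) \<and> length X \<le> 2 * (fsize p + 1)"
    using na nf comp len by blast
qed

end
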